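(* Let $K\ge1$, $\Delta_0,B>0$, and for $k=1,\dots,K$ let $m_k\ge0$, $v_k\ge0$. Let $\mathcal{G}\subset\mathbb{R}^K$ be the set of $\mathbf{r}$ for which there exist $\mathbf{p},\mathbf{y}\in\mathbb{R}^K$ and a $2K\times2K$ real matrix $\mathbf{H}=\begin{bmatrix}\mathbf{H}^{xx}&\mathbf{H}^{x\phi}\\(\mathbf{H}^{x\phi})^{\rm T}&\mathbf{H}^{\phi\phi}\end{bmatrix}$ satisfying: $r_k\ge0$; $r_k\le\Delta_0B\,p_k\log_2(1+y_k/p_k)$; $0\le p_k\le1$; $\sum_kp_k\le1$; $H^{x\phi}_{k,k}=y_k-p_km_k$; $H^{\phi\phi}_{k,k}=v_k$ and $H^{\phi\phi}_{i,j}=0$ for $i\neq j$; $H^{xx}_{k,k}\le p_k-p_k^2$; $\sum_{i,j}H^{xx}_{i,j}\le\sum_ip_i-(\sum_ip_i)^2$; $\mathbf{H}\succeq0$ (all for every $k$). Let $f(\mathbf{r})=\sum_k\ln r_k$ and $\mathbf{r}^*=\arg\max_{\mathbf{r}\in\mathcal{G}}f(\mathbf{r})$. Consider the iteration (Algorithm 1) with tolerance $\hat\epsilon>0$: $\mathbf{w}^{(1)}=[1/\sqrt K,\dots,1/\sqrt K]^{\rm T}$; at iteration $i$, $\mathbf{r}^{(i)}=\arg\max_{\mathbf{r}\in\mathcal{G}}\langle\mathbf{w}^{(i)},\mathbf{r}\rangle$; if $|\langle\mathbf{w}^{(i)},\mathbf{r}^{(i)}-\mathbf{r}^*\rangle|<\hat\epsilon$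 the algorithm terminates, otherwise it sets $$a^{(i)}=\frac{\|\mathbf{r}^*-\mathbf{r}^{(i)}\|_2^2}{\langle\mathbf{w}^{(i)},\mathbf{r}^{(i)}-\mathbf{r}^*\rangle},\quad b^{(i)}=-\min_k\frac{r^*_k-r^{(i)}_k}{w^{(i)}_k},\quad \mathbf{u}^{(i)}=a^{(i)}\mathbf{w}^{(i)}+(\mathbf{r}^*-\mathbf{r}^{(i)})+b^{(i)}\mathbf{w}^{(i)},\quad \mathbf{w}^{(i+1)}=\frac{\mathbf{u}^{(i)}}{\|\mathbf{u}^{(i)}\|_2}.$$ If $\mathbf{w}^{(i)}>0$ and $\|\mathbf{w}^{(i)}\|_2=1$, then $\mathbf{w}^{(i+1)}>0$ and $\|\mathbf{w}^{(i+1)}\|_2=1$.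
   Context: $\langle\cdot,\cdot\rangle$ is the Euclidean inner product; vector inequalities $>0$ are componentwise strict; $\mathbf{H}\succeq0$ means positive semidefinite; $p\log_2(1+y/p)$ is understood as its perspective (value $0$ at $p=0$). $\mathbf{w}^{(i+1)}$ is only computed when iteration $i$ does not terminate. *)

theory Defs
  imports "HOL-Analysis.Analysis" "HOL-Library.Extended_Real"
begin

text \<open>Rate constraint r \<le> Delta0 B p log2(1 + y/p), with the perspective convention:
  value 0 at p = 0; for p > 0 the logarithm must be defined (1 + y/p > 0).\<close>
definition rate_ok :: "real \<Rightarrow> real \<Rightarrow> real \<Rightarrow> real \<Rightarrow> real \<Rightarrow> bool" where
  "rate_ok D0 B p y r \<longleftrightarrow>
     (p = 0 \<and> r \<le> 0) \<or>
     (p > 0 \<and> 1 + y / p > 0 \<and> r \<le> D0 * B * (p * log 2 (1 + y / p)))"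

definition psd :: "real^'n^'n \<Rightarrow> bool" where
  "psd H \<longleftrightarrow> transpose H = H \<and> (\<forall>x. 0 \<le> x \<bullet> (H *v x))"

text \<open>The feasible set G.  The 2K x 2K matrix H is indexed by 'k + 'k:
  Inl i is the x-block, Inr i the phi-block.\<close>
definition feasible_set ::
  "real \<Rightarrow> real \<Rightarrow> real^'k \<Rightarrow> real^'k \<Rightarrow> (real^'k) set" where
  "feasible_set D0 B m v = {r. \<exists>(p::real^'k) (y::real^'k) (H::real^('k+'k)^('k+'k)).
      (\<forall>k. 0 \<le> r$k) \<and>
      (\<forall>k. rate_ok D0 B (p$k) (y$k) (r$k)) \<and>
      (\<forall>k. 0 \<le> p$k \<and> p$k \<le> 1) \<and>
      (\<Sum>k\<in>UNIV. p$k) \<le> 1 \<and>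
      (\<forall>k. H$Inl k$Inr k = y$k - p$k * m$k) \<and>
      (\<forall>k. H$Inr k$Inr k = v$k) \<and>
      (\<forall>i j. i \<noteq> j \<longrightarrow> H$Inr i$Inr j = 0) \<and>
      (\<forall>k. H$Inl k$Inl k \<le> p$k - (p$k)^2) \<and>
      (\<Sum>i\<in>UNIV. \<Sum>j\<in>UNIV. H$Inl i$Inl j) \<le> (\<Sum>i\<in>UNIV. p$i) - (\<Sum>i\<in>UNIV. p$i)^2 \<and>
      psd H}"

definition lnE :: "real \<Rightarrow> ereal" where
  "lnE x = (if x > 0 then ereal (ln x) else -\<infinity>)"

definition utility :: "real^'k \<Rightarrow> ereal" where
  "utility r = (\<Sum>k\<in>UNIV. lnE (r$k))"

definition alg_a :: "real^'k \<Rightarrow> real^'k \<Rightarrow> real^'k \<Rightarrow> real" where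
  "alg_a w r rs = (norm (rs - r))^2 / (w \<bullet> (r - rs))"

definition alg_b :: "real^'k \<Rightarrow> real^'k \<Rightarrow> real^'k \<Rightarrow> real" where
  "alg_b w r rs = - Min (range (\<lambda>k. (rs$k - r$k) / w$k))"

definition alg_u :: "real^'k \<Rightarrow> real^'k \<Rightarrow> real^'k \<Rightarrow> real^'k" where
  "alg_u w r rs = alg_a w r rs *\<^sub>R w + (rs - r) + alg_b w r rs *\<^sub>R w"

definition alg_next :: "real^'k \<Rightarrow> real^'k \<Rightarrow> real^'k \<Rightarrow> real^'k" where
  "alg_next w r rs = (1 / norm (alg_u w r rs)) *\<^sub>R alg_u w r rs"

end

theory Submission
  imports Defs
begin

theorem corollary3:
  fixes D0 B eps :: real and m v rs :: "real^'k"
    and w r :: "nat \<Rightarrow> real^'k" and i :: nat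
  assumes "D0 > 0" and "B > 0" and "eps > 0"
    and "\<forall>k. m$k \<ge> 0" and "\<forall>k. v$k \<ge> 0"
    and rs_opt: "rs \<in> feasible_set D0 B m v"
        "\<forall>r'\<in>feasible_set D0 B m v. utility r' \<le> utility rs"
    and w1: "w 1 = (\<chi> k. 1 / sqrt (real CARD('k)))"
    and r_opt: "\<forall>j\<ge>1. r j \<in> feasible_set D0 B m v \<and>
                   (\<forall>r'\<in>feasible_set D0 B m v. w j \<bullet> r' \<le> w j \<bullet> r j)"
    and step: "\<forall>j\<ge>1. \<bar>w j \<bullet> (r j - rs)\<bar> \<ge> eps \<longrightarrow> w (Suc j) = alg_next (w j) (r j) rs"
    and "i \<ge> 1"
    and noterm: "\<bar>w i \<bullet> (r i - rs)\<bar> \<ge> eps"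
    and "\<forall>k. w i $ k > 0" and "norm (w i) = 1"
  shows "(\<forall>k. w (Suc i) $ k > 0) \<and> norm (w (Suc i)) = 1"
proof -
  have wpos: "\<forall>k. w i $ k > 0" by fact
  have rin: "r i \<in> feasible_set D0 B m v" and ropt: "\<forall>r'\<in>feasible_set D0 B m v. w i \<bullet> r' \<le> w i \<bullet> r i"
    using r_opt \<open>i \<ge> 1\<close> by auto
  have ge: "w i \<bullet> rs \<le> w i \<bullet> r i" using ropt rs_opt(1) by blast
  have dpos: "w i \<bullet> (r i - rs) > 0"
    using ge noterm \<open>eps > 0\<close> by (auto simp: inner_diff_right)
  have wn: "w (Suc i) = alg_next (w i) (r i) rs" using step \<open>i \<ge> 1\<close> noterm by blast
  have dne: "r i - rs \<noteq> 0" using dpos by auto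
  have apos: "alg_a (w i) (r i) rs > 0"
    unfolding alg_a_def using dpos dne by auto
  have upos: "alg_u (w i) (r i) rs $ k > 0" for k
  proof -
    have fin: "finite (range (\<lambda>k. (rs$k - r i$k) / w i$k))" by simp
    have "Min (range (\<lambda>k. (rs$k - r i$k) / w i$k)) \<le> (rs$k - r i$k) / w i$k"
      using fin by (intro Min_le) auto
    hence "alg_b (w i) (r i) rs \<ge> (r i$k - rs$k) / w i$k"
      unfolding alg_b_def by (smt (verit, best) minus_divide_left minus_diff_eq)
    hence hb: "alg_b (w i) (r i) rs * w i$k \<ge> r i$k - rs$k"
      using wpos[rule_format, of k] by (simp add: pos_divide_le_eq mult.commute)
    have ha: "alg_a (w i) (r i) rs * w i$k > 0" using apos wpos by simp
    show ?thesis unfolding alg_u_def using ha hb by simp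
  qed
  have une: "alg_u (w i) (r i) rs \<noteq> 0"
    using upos[of undefined] by (metis less_irrefl zero_index)
  have "w (Suc i) $ k > 0" for k
    unfolding wn alg_next_def using upos[of k] une by simp
  moreover have "norm (w (Suc i)) = 1"
    unfolding wn alg_next_def using une by simp
  ultimately show ?thesis by blast
qed

end
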